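(* Let $P$ be a finite set of points in the plane in general position with $|P|$ even, and let $A\subseteq P$ be the union of the vertex sets of some connected components of the underlying graph of $P$. Then $|A|$ is even, and for any two points $a,b\in A$, the line through $a$ and $b$ is a halving line of the point set $A$ if and only if it is a halving line of $P$. Equivalently, the underlying graph of the point set $A$ equals the subgraph of the underlying graph of $P$ induced on $A$.
   Context: Points are in general position if no three are collinear. For a finite set $P$ of $n$ points in general position with $n$ even, a halving line of $P$ is a line through two points of $P$ that has exactly $(n-2)/2$ points of $P$ strictly on each side. The underlying graph of $P$ has vertex set $P$, and two points are adjacent if and only if the line through them is a halving line of $P$. *)

theory Defs
  imports Complex_Main
begin

type_synonym point = "real \<times> real"

text \<open>Orientation: positive iff c lies strictly left of the directed line a->b,
negative iff strictly right, zero iff a, b, c are collinear.\<close>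
definition orient :: "point \<Rightarrow> point \<Rightarrow> point \<Rightarrow> real" where
  "orient a b c = (fst b - fst a) * (snd c - snd a) - (snd b - snd a) * (fst c - fst a)"

definition general_position :: "point set \<Rightarrow> bool" where
  "general_position P \<longleftrightarrow>
     (\<forall>a\<in>P. \<forall>b\<in>P. \<forall>c\<in>P. a \<noteq> b \<and> a \<noteq> c \<and> b \<noteq> c \<longrightarrow> orient a b c \<noteq> 0)"

definition halving_line :: "point set \<Rightarrow> point \<Rightarrow> point \<Rightarrow> bool" where
  "halving_line P a b \<longleftrightarrow> a \<in> P \<and> b \<in> P \<and> a \<noteq> b \<and>
     2 * card {c \<in> P. orient a b c > 0} + 2 = card P \<and>
     2 * card {c \<in> P. orient a b c < 0} + 2 = card P"

definition underlying_adj :: "point set \<Rightarrow> point \<Rightarrow> point \<Rightarrow> bool" where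
  "underlying_adj P a b \<longleftrightarrow> halving_line P a b"

definition component :: "point set \<Rightarrow> point \<Rightarrow> point set" where
  "component P x = {y. (underlying_adj P)\<^sup>*\<^sup>* x y}"

definition components :: "point set \<Rightarrow> point set set" where
  "components P = component P ` P"

end

theory Submission
  imports Defs
begin


definition fv :: "point \<Rightarrow> point \<Rightarrow> real" where
  "fv u p = fst u * fst p + snd u * snd p"
definition rk :: "(point \<Rightarrow> real) \<Rightarrow> point set \<Rightarrow> point \<Rightarrow> nat" where
  "rk F P p = card {x\<in>P. F x < F p}"
definition Low :: "(point \<Rightarrow> real) \<Rightarrow> point set \<Rightarrow> point set" where
  "Low F P = {p\<in>P. 2 * rk F P p < card P}"

lemma rank_split:
  fixes F0 G :: "point \<Rightarrow> real"
  assumes fin: "finite P" and ref: "\<And>x y. x\<in>P \<Longrightarrow> y\<in>P \<Longrightarrow> F0 x < F0 y \<Longrightarrow> G x < G y"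
    and xP: "x \<in> P"
  shows "rk G P x = card {z\<in>P. F0 z < F0 x} + card {z\<in>P. z \<noteq> x \<and> F0 z = F0 x \<and> G z < G x}"
proof -
  have "{z\<in>P. G z < G x} = {z\<in>P. F0 z < F0 x} \<union> {z\<in>P. z \<noteq> x \<and> F0 z = F0 x \<and> G z < G x}"
  proof (rule set_eqI, rule iffI)
    fix z assume "z \<in> {z\<in>P. G z < G x}"
    then have z: "z \<in> P" "G z < G x" by auto
    have "\<not> F0 x < F0 z" using ref[OF xP z(1)] z(2) by force
    then show "z \<in> {z\<in>P. F0 z < F0 x} \<union> {z\<in>P. z \<noteq> x \<and> F0 z = F0 x \<and> G z < G x}"
      using z by auto
  next
    fix z assume "z \<in> {z\<in>P. F0 z < F0 x} \<union> {z\<in>P. z \<noteq> x \<and> F0 z = F0 x \<and> G z < G x}"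
    then show "z \<in> {z\<in>P. G z < G x}" using ref[of z x] xP by auto
  qed
  moreover have "card ({z\<in>P. F0 z < F0 x} \<union> {z\<in>P. z \<noteq> x \<and> F0 z = F0 x \<and> G z < G x}) =
     card {z\<in>P. F0 z < F0 x} + card {z\<in>P. z \<noteq> x \<and> F0 z = F0 x \<and> G z < G x}"
    by (rule card_Un_disjoint) (use fin in auto)
  ultimately show ?thesis unfolding rk_def by simp
qed

lemma rank_single:
  fixes F0 G :: "point \<Rightarrow> real"
  assumes fin: "finite P" and ref: "\<And>x y. x\<in>P \<Longrightarrow> y\<in>P \<Longrightarrow> F0 x < F0 y \<Longrightarrow> G x < G y"
    and xP: "x \<in> P" and no: "\<And>z. z\<in>P \<Longrightarrow> z \<noteq> x \<Longrightarrow> F0 z \<noteq> F0 x"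
  shows "rk G P x = card {z\<in>P. F0 z < F0 x}"
  using rank_split[OF fin ref xP] no by (auto simp: card_eq_0_iff)

lemma rank_pair:
  fixes F0 G :: "point \<Rightarrow> real"
  assumes fin: "finite P" and ref: "\<And>x y. x\<in>P \<Longrightarrow> y\<in>P \<Longrightarrow> F0 x < F0 y \<Longrightarrow> G x < G y"
    and xP: "x \<in> P" and yP: "y \<in> P" and xy: "x \<noteq> y" and eq: "F0 x = F0 y"
    and no: "\<And>z. z\<in>P \<Longrightarrow> z \<noteq> x \<Longrightarrow> z \<noteq> y \<Longrightarrow> F0 z \<noteq> F0 x"
  shows "rk G P x = card {z\<in>P. F0 z < F0 x} + (if G y < G x then 1 else 0)"
proof -
  have "{z\<in>P. z \<noteq> x \<and> F0 z = F0 x \<and> G z < G x} = (if G y < G x then {y} else {})"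
    using no xy yP eq by auto
  then show ?thesis using rank_split[OF fin ref xP] by simp
qed

lemma R_mono:
  fixes F0 :: "point \<Rightarrow> real"
  assumes fin: "finite P" and "x \<in> P" "y\<in>P" "F0 x < F0 y"
  shows "card {z\<in>P. F0 z < F0 x} < card {z\<in>P. F0 z < F0 y}"
  by (rule psubset_card_mono) (use assms in auto)


lemma comb_local:
  fixes Fz Fl Fr :: "point \<Rightarrow> real"
  assumes fin: "finite P" and AP: "A \<subseteq> P" and ev: "even (card P)"
    and inj1: "inj_on Fl P" and inj2: "inj_on Fr P"
    and ref1: "\<And>x y. x\<in>P \<Longrightarrow> y\<in>P \<Longrightarrow> Fz x < Fz y \<Longrightarrow> Fl x < Fl y"
    and ref2: "\<And>x y. x\<in>P \<Longrightarrow> y\<in>P \<Longrightarrow> Fz x < Fz y \<Longrightarrow> Fr x < Fr y"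
    and flip: "\<And>x y. x\<in>P \<Longrightarrow> y\<in>P \<Longrightarrow> x\<noteq>y \<Longrightarrow> Fz x = Fz y \<Longrightarrow> Fl x < Fl y \<Longrightarrow> Fr y < Fr x"
    and tri: "\<And>x y z. x\<in>P \<Longrightarrow> y\<in>P \<Longrightarrow> z\<in>P \<Longrightarrow> x\<noteq>y \<Longrightarrow> x\<noteq>z \<Longrightarrow> y\<noteq>z
               \<Longrightarrow> Fz x = Fz y \<Longrightarrow> Fz x = Fz z \<Longrightarrow> False"
    and H: "\<And>x y. x\<in>P \<Longrightarrow> y\<in>P \<Longrightarrow> x\<noteq>y \<Longrightarrow> Fz x = Fz y
               \<Longrightarrow> 2 * card {z\<in>P. Fz z < Fz x} + 2 = card P \<Longrightarrow> (x\<in>A \<longleftrightarrow> y\<in>A)"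
  shows "card (A \<inter> Low Fl P) = card (A \<inter> Low Fr P)"
proof -
  define R where "R x = card {z\<in>P. Fz z < Fz x}" for x
  obtain m where m: "card P = 2 * m" using ev by blast
  have gen: "z \<in> Low Fl P \<longleftrightarrow> z \<in> Low Fr P"
    if zP: "z \<in> P" and nz: "\<And>z'. z'\<in>P \<Longrightarrow> z' \<noteq> z \<Longrightarrow> Fz z' = Fz z \<Longrightarrow> 2 * R z + 2 \<noteq> card P" for z
  proof (cases "\<exists>z'\<in>P. z' \<noteq> z \<and> Fz z' = Fz z")
    case True
    then obtain z' where z': "z'\<in>P" "z' \<noteq> z" "Fz z' = Fz z" by blast
    have no: "Fz w \<noteq> Fz z" if "w\<in>P" "w \<noteq> z" "w \<noteq> z'" for w
    proof
      assume eq: "Fz w = Fz z"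
      show False by (rule tri[of z z' w]) (use zP z' that eq in auto)
    qed
    have r1: "rk Fl P z = R z + (if Fl z' < Fl z then 1 else 0)"
      using rank_pair[of P Fz Fl z z', OF fin ref1 zP z'(1) z'(2)[symmetric] z'(3)[symmetric] no] unfolding R_def .
    have r2: "rk Fr P z = R z + (if Fr z' < Fr z then 1 else 0)"
      using rank_pair[of P Fz Fr z z', OF fin ref2 zP z'(1) z'(2)[symmetric] z'(3)[symmetric] no] unfolding R_def .
    have "2 * R z + 2 \<noteq> card P" using nz z' by blast
    note e = this
    have k1: "2 * rk Fl P z < card P \<longleftrightarrow> 2 * R z < card P"
    proof (cases "Fl z' < Fl z")
      case True with r1 have "rk Fl P z = R z + 1" by simp
      then show ?thesis using e m by presburger
    next
      case False with r1 have "rk Fl P z = R z" by simp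
      then show ?thesis by simp
    qed
    have k2: "2 * rk Fr P z < card P \<longleftrightarrow> 2 * R z < card P"
    proof (cases "Fr z' < Fr z")
      case True with r2 have "rk Fr P z = R z + 1" by simp
      then show ?thesis using e m by presburger
    next
      case False with r2 have "rk Fr P z = R z" by simp
      then show ?thesis by simp
    qed
    show ?thesis unfolding Low_def using k1 k2 zP by simp
  next
    case False
    then have nf: "Fz w \<noteq> Fz z" if "w\<in>P" "w \<noteq> z" for w using that by blast
    have "rk Fl P z = R z" "rk Fr P z = R z"
      using rank_single[of P Fz Fl z, OF fin ref1 zP nf] rank_single[of P Fz Fr z, OF fin ref2 zP nf] unfolding R_def by auto
    then show ?thesis unfolding Low_def using zP by auto
  qed
  have Req: "Fz x = Fz y" if "x\<in>P" "y\<in>P" "R x = R y" for x y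
  proof (rule ccontr)
    assume "Fz x \<noteq> Fz y"
    then consider "Fz x < Fz y" | "Fz y < Fz x" by linarith
    then show False
    proof cases
      case 1 then show False using R_mono[OF fin that(1,2) 1] that(3) unfolding R_def by simp
    next
      case 2 then show False using R_mono[OF fin that(2,1) 2] that(3) unfolding R_def by simp
    qed
  qed
  show ?thesis
  proof (cases "\<exists>x\<in>P. \<exists>y\<in>P. x \<noteq> y \<and> Fz x = Fz y \<and> 2 * R x + 2 = card P")
    case False
    note nopair = False
    have "A \<inter> Low Fl P = A \<inter> Low Fr P"
    proof (rule set_eqI)
      fix z show "z \<in> A \<inter> Low Fl P \<longleftrightarrow> z \<in> A \<inter> Low Fr P"
      proof (cases "z \<in> P")
        case True
        have "z \<in> Low Fl P \<longleftrightarrow> z \<in> Low Fr P"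
        proof (rule gen[OF True])
          fix z' assume z': "z'\<in>P" "z'\<noteq>z" "Fz z' = Fz z"
          show "2 * R z + 2 \<noteq> card P"
          proof
            assume e: "2 * R z + 2 = card P"
            have "\<exists>x\<in>P. \<exists>y\<in>P. x \<noteq> y \<and> Fz x = Fz y \<and> 2 * R x + 2 = card P"
              using True z' e by (intro bexI[of _ z] bexI[of _ z']) auto
            from nopair this show False by (rule notE)
          qed
        qed
        then show ?thesis by blast
      next
        case False then show ?thesis unfolding Low_def by auto
      qed
    qed
    then show ?thesis by simp
  next
    case True
    then obtain x y where xy: "x\<in>P" "y\<in>P" "x \<noteq> y" "Fz x = Fz y" "2 * R x + 2 = card P" by blast
    obtain p q where pq: "p\<in>P" "q\<in>P" "p \<noteq> q" "Fz p = Fz q" "2 * R p + 2 = card P" "Fl p < Fl q"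
    proof (cases "Fl x < Fl y")
      case True then show ?thesis using that xy by blast
    next
      case False
      moreover have "Fl x \<noteq> Fl y" using inj1 xy unfolding inj_on_def by blast
      ultimately have "Fl y < Fl x" by linarith
      moreover have "R y = R x" unfolding R_def using xy by simp
      ultimately show ?thesis using that[of y x] xy by auto
    qed
    have f2: "Fr q < Fr p" using flip[OF pq(1,2,3,4,6)] .
    have no: "Fz w \<noteq> Fz p" if "w\<in>P" "w \<noteq> p" "w \<noteq> q" for w
    proof
      assume eq: "Fz w = Fz p"
      show False by (rule tri[of p q w]) (use pq that eq in auto)
    qed
    have Rq: "R q = R p" unfolding R_def using pq by simp
    have no': "Fz w \<noteq> Fz q" if "w\<in>P" "w \<noteq> q" "w \<noteq> p" for w
      using no[OF that(1,3,2)] pq(4) by simp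
    have pq3: "q \<noteq> p" using pq(3) by simp
    have pq4: "Fz q = Fz p" using pq(4) by simp
    have rp1: "rk Fl P p = R p"
      using rank_pair[of P Fz Fl p q, OF fin ref1 pq(1,2,3,4) no] pq(6) unfolding R_def by simp
    have rq1: "rk Fl P q = R p + 1"
      using rank_pair[of P Fz Fl q p, OF fin ref1 pq(2,1) pq3 pq4 no'] pq(6) Rq unfolding R_def by simp
    have rp2: "rk Fr P p = R p + 1"
      using rank_pair[of P Fz Fr p q, OF fin ref2 pq(1,2,3,4) no] f2 unfolding R_def by simp
    have rq2: "rk Fr P q = R p"
      using rank_pair[of P Fz Fr q p, OF fin ref2 pq(2,1) pq3 pq4 no'] f2 Rq unfolding R_def by simp
    have L1p: "p \<in> Low Fl P" "q \<notin> Low Fl P" unfolding Low_def using rp1 rq1 pq(1,2,5) by simp_all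
    have L2p: "q \<in> Low Fr P" "p \<notin> Low Fr P" unfolding Low_def using rp2 rq2 pq(1,2,5) by simp_all
    have oth: "z \<in> Low Fl P \<longleftrightarrow> z \<in> Low Fr P" if "z \<in> P" "z \<noteq> p" "z \<noteq> q" for z
    proof (rule gen[OF that(1)])
      fix z' assume "z'\<in>P" "z' \<noteq> z" "Fz z' = Fz z"
      show "2 * R z + 2 \<noteq> card P"
      proof
        assume "2 * R z + 2 = card P"
        then have "R z = R p" using pq by simp
        then have "Fz z = Fz p" using Req[of z p] that(1) pq(1) by blast
        then show False using no that by blast
      qed
    qed
    have L2: "Low Fr P = (Low Fl P - {p}) \<union> {q}"
    proof (rule set_eqI)
      fix z show "z \<in> Low Fr P \<longleftrightarrow> z \<in> (Low Fl P - {p}) \<union> {q}"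
        using oth[of z] L1p L2p by (cases "z \<in> P") (auto simp: Low_def)
    qed
    have pqA: "p \<in> A \<longleftrightarrow> q \<in> A" using H[OF pq(1,2,3,4)] pq(5) unfolding R_def by blast
    show ?thesis
    proof (cases "p \<in> A")
      case True
      then have "A \<inter> Low Fr P = (A \<inter> Low Fl P - {p}) \<union> {q}" using pqA L2 by blast
      moreover have "finite (A \<inter> Low Fl P)" using fin AP finite_subset by blast
      moreover have "card (A \<inter> Low Fl P) > 0"
        using \<open>finite (A \<inter> Low Fl P)\<close> L1p True card_gt_0_iff by blast
      ultimately show ?thesis using L1p True pqA by (simp add: card_insert_if)
    next
      case False
      then have "A \<inter> Low Fr P = A \<inter> Low Fl P" using pqA L2 by blast
      then show ?thesis by simp
    qed
  qed
qed



definition wp :: "point \<Rightarrow> point \<Rightarrow> real \<Rightarrow> point" where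
  "wp u d s = (fst u + s * fst d, snd u + s * snd d)"

lemma fv_wp: "fv (wp u d s) p = fv u p + s * fv d p"
  unfolding fv_def wp_def by (simp add: algebra_simps)

lemma orient_zero_if:
  fixes w :: point
  assumes "w \<noteq> (0,0)" "fv w p = fv w q" "fv w p = fv w r"
  shows "orient p q r = 0"
proof -
  obtain w1 w2 where w: "w = (w1, w2)" by (cases w)
  have e1: "w1 * (fst q - fst p) + w2 * (snd q - snd p) = 0"
    using assms(2) unfolding fv_def w by (simp add: algebra_simps)
  have e2: "w1 * (fst r - fst p) + w2 * (snd r - snd p) = 0"
    using assms(3) unfolding fv_def w by (simp add: algebra_simps)
  have a1: "w1 * orient p q r = 0" unfolding orient_def using e1 e2 by algebra
  have a2: "w2 * orient p q r = 0" unfolding orient_def using e1 e2 by algebra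
  have "w1 \<noteq> 0 \<or> w2 \<noteq> 0" using assms(1) w by auto
  then show ?thesis using a1 a2 by auto
qed

lemma geo_tri:
  fixes w :: point
  assumes "w \<noteq> (0,0)" "general_position P" "p\<in>P" "q\<in>P" "r\<in>P" "p\<noteq>q" "p\<noteq>r" "q\<noteq>r"
    "fv w p = fv w q" "fv w p = fv w r"
  shows False
  using orient_zero_if[OF assms(1,9,10)] assms(2-8) unfolding general_position_def by blast

lemma geo_half:
  fixes w :: point
  assumes fin: "finite P" and gp: "general_position P" and w0: "w \<noteq> (0,0)"
    and pP: "p\<in>P" and qP: "q\<in>P" and pq: "p\<noteq>q" and eq: "fv w p = fv w q"
    and cnt: "2 * card {z\<in>P. fv w z < fv w p} + 2 = card P"
  shows "halving_line P p q"
proof -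
  obtain w1 w2 where w: "w = (w1, w2)" by (cases w)
  define X1 where "X1 = fst q - fst p"
  define X2 where "X2 = snd q - snd p"
  define k where "k = w1 * X2 - w2 * X1"
  define N where "N = w1^2 + w2^2"
  have e1: "w1 * X1 + w2 * X2 = 0"
    using eq unfolding fv_def w X1_def X2_def by (simp add: algebra_simps)
  have wne: "w1 \<noteq> 0 \<or> w2 \<noteq> 0" using w0 w by auto
  have Npos: "N > 0" unfolding N_def using wne by (auto simp: sum_power2_gt_zero_iff)
  have key: "orient p q c * N = - (fv w c - fv w p) * k" for c
    unfolding orient_def N_def k_def fv_def w using e1 unfolding X1_def X2_def by (simp only: fst_conv snd_conv) algebra
  have kne: "k \<noteq> 0"
  proof
    assume k0: "k = 0"
    have "X2 * N = w1 * k + w2 * (w1 * X1 + w2 * X2)" unfolding N_def k_def by algebra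
    then have "X2 = 0" using k0 e1 Npos by simp
    moreover have "X1 * N = w1 * (w1 * X1 + w2 * X2) - w2 * k" unfolding N_def k_def by algebra
    then have "X1 = 0" using k0 e1 Npos by simp
    ultimately have "p = q" unfolding X1_def X2_def by (simp add: prod_eq_iff)
    then show False using pq by simp
  qed
  define Lo where "Lo = {z\<in>P. fv w z < fv w p}"
  define Hi where "Hi = {z\<in>P. fv w z > fv w p}"
  have pos: "orient p q c > 0 \<longleftrightarrow> (if k > 0 then fv w c < fv w p else fv w c > fv w p)" for c
  proof -
    have "orient p q c > 0 \<longleftrightarrow> orient p q c * N > 0" using Npos by (simp add: zero_less_mult_iff)
    also have "\<dots> \<longleftrightarrow> - (fv w c - fv w p) * k > 0" by (simp only: key)
    also have "\<dots> \<longleftrightarrow> (if k > 0 then fv w c < fv w p else fv w c > fv w p)"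
      using kne by (auto simp: zero_less_mult_iff)
    finally show ?thesis .
  qed
  have neg: "orient p q c < 0 \<longleftrightarrow> (if k > 0 then fv w c > fv w p else fv w c < fv w p)" for c
  proof -
    have "orient p q c < 0 \<longleftrightarrow> orient p q c * N < 0" using Npos by (simp add: mult_less_0_iff)
    also have "\<dots> \<longleftrightarrow> - (fv w c - fv w p) * k < 0" by (simp only: key)
    also have "\<dots> \<longleftrightarrow> (if k > 0 then fv w c > fv w p else fv w c < fv w p)"
      using kne by (auto simp: mult_less_0_iff)
    finally show ?thesis .
  qed
  have part: "P = Lo \<union> Hi \<union> {p, q}"
  proof (rule set_eqI, rule iffI)
    fix z assume zP: "z \<in> P"
    show "z \<in> Lo \<union> Hi \<union> {p, q}"
    proof (cases "fv w z = fv w p")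
      case True
      have "z = p \<or> z = q"
      proof (rule ccontr)
        assume "\<not> (z = p \<or> z = q)"
        then show False using geo_tri[OF w0 gp pP qP zP pq _ _ eq True[symmetric]] by blast
      qed
      then show ?thesis by blast
    next
      case False then show ?thesis using zP unfolding Lo_def Hi_def by auto
    qed
  next
    fix z assume "z \<in> Lo \<union> Hi \<union> {p, q}" then show "z \<in> P" using pP qP unfolding Lo_def Hi_def by auto
  qed
  have "card P = card Lo + card Hi + 2"
  proof -
    have fL: "finite Lo" "finite Hi" unfolding Lo_def Hi_def using fin by auto
    have "card (Lo \<union> Hi \<union> {p, q}) = card (Lo \<union> Hi) + card {p, q}"
      by (rule card_Un_disjoint) (use fL eq in \<open>auto simp: Lo_def Hi_def\<close>)
    also have "card (Lo \<union> Hi) = card Lo + card Hi"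
      by (rule card_Un_disjoint) (use fL in \<open>auto simp: Lo_def Hi_def\<close>)
    finally show ?thesis using part pq by simp
  qed
  then have cH: "2 * card Hi + 2 = card P" using cnt unfolding Lo_def by simp
  have cL: "2 * card Lo + 2 = card P" using cnt unfolding Lo_def by simp
  have S1: "{c\<in>P. orient p q c > 0} = (if k > 0 then Lo else Hi)"
    unfolding Lo_def Hi_def using pos by auto
  have S2: "{c\<in>P. orient p q c < 0} = (if k > 0 then Hi else Lo)"
    unfolding Lo_def Hi_def using neg by auto
  show ?thesis unfolding halving_line_def using S1 S2 cH cL pP qP pq by simp
qed



lemma halving_sym: "halving_line P a b \<Longrightarrow> halving_line P b a"
proof -
  assume h: "halving_line P a b"
  have o: "orient b a c = - orient a b c" for c unfolding orient_def by algebra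
  have "{c\<in>P. orient b a c > 0} = {c\<in>P. orient a b c < 0}" "{c\<in>P. orient b a c < 0} = {c\<in>P. orient a b c > 0}"
    using o by auto
  then show ?thesis using h unfolding halving_line_def by auto
qed

lemma comp_sub: "x \<in> P \<Longrightarrow> component P x \<subseteq> P"
proof
  fix y assume xP: "x \<in> P" and "y \<in> component P x"
  then have "(underlying_adj P)\<^sup>*\<^sup>* x y" unfolding component_def by simp
  then show "y \<in> P"
  proof (induction rule: rtranclp_induct)
    case base then show ?case using xP .
  next
    case (step y z) then show ?case unfolding underlying_adj_def halving_line_def by simp
  qed
qed

lemma comp_closed1:
  assumes "\<C> \<subseteq> components P" "A = \<Union>\<C>" "halving_line P x y" "x \<in> A"
  shows "y \<in> A"
proof -
  obtain K where K: "K \<in> \<C>" "x \<in> K" using assms by auto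
  then obtain r where r: "r \<in> P" "K = component P r" using assms unfolding components_def by auto
  then have "(underlying_adj P)\<^sup>*\<^sup>* r x" using K unfolding component_def by simp
  then have "(underlying_adj P)\<^sup>*\<^sup>* r y" using assms(3) unfolding underlying_adj_def
    by (simp add: rtranclp.rtrancl_into_rtrancl)
  then have "y \<in> K" using r unfolding component_def by simp
  then show ?thesis using K assms by auto
qed

lemma comp_closed:
  assumes "\<C> \<subseteq> components P" "A = \<Union>\<C>" "halving_line P x y"
  shows "x \<in> A \<longleftrightarrow> y \<in> A"
  using comp_closed1[OF assms(1,2,3)] comp_closed1[OF assms(1,2) halving_sym[OF assms(3)]] by blast

lemma comp_subset:
  assumes "\<C> \<subseteq> components P" "A = \<Union>\<C>"
  shows "A \<subseteq> P"
  using assms comp_sub unfolding components_def by blast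

lemma finite_cross:
  fixes \<alpha> \<beta> :: "point \<Rightarrow> real"
  assumes fin: "finite P" and sep: "\<And>p q. p\<in>P \<Longrightarrow> q\<in>P \<Longrightarrow> p\<noteq>q \<Longrightarrow> \<alpha> p \<noteq> \<alpha> q \<or> \<beta> p \<noteq> \<beta> q"
  shows "finite {s. \<exists>p\<in>P. \<exists>q\<in>P. p\<noteq>q \<and> \<alpha> p + s*\<beta> p = \<alpha> q + s*\<beta> q}"
proof (rule finite_subset)
  show "{s. \<exists>p\<in>P. \<exists>q\<in>P. p\<noteq>q \<and> \<alpha> p + s*\<beta> p = \<alpha> q + s*\<beta> q}
        \<subseteq> (\<lambda>(p,q). (\<alpha> q - \<alpha> p) / (\<beta> p - \<beta> q)) ` (P \<times> P)"
  proof
    fix s assume "s \<in> {s. \<exists>p\<in>P. \<exists>q\<in>P. p\<noteq>q \<and> \<alpha> p + s*\<beta> p = \<alpha> q + s*\<beta> q}"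
    then obtain p q where pq: "p\<in>P" "q\<in>P" "p\<noteq>q" "\<alpha> p + s*\<beta> p = \<alpha> q + s*\<beta> q" by blast
    have "\<beta> p \<noteq> \<beta> q"
    proof
      assume "\<beta> p = \<beta> q"
      then have "\<alpha> p = \<alpha> q" using pq(4) by simp
      then show False using sep[OF pq(1,2,3)] \<open>\<beta> p = \<beta> q\<close> by blast
    qed
    then have "s = (\<alpha> q - \<alpha> p) / (\<beta> p - \<beta> q)" using pq(4) by (simp add: field_simps)
    then show "s \<in> (\<lambda>(p,q). (\<alpha> q - \<alpha> p) / (\<beta> p - \<beta> q)) ` (P \<times> P)" using pq by force
  qed
  show "finite ((\<lambda>(p,q). (\<alpha> q - \<alpha> p) / (\<beta> p - \<beta> q)) ` (P \<times> P))" using fin by simp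
qed

lemma aff_ref_left:
  fixes a b l m :: real
  assumes "l < m" "a + m * b < 0" "\<And>t. l \<le> t \<Longrightarrow> t < m \<Longrightarrow> a + t * b \<noteq> 0"
  shows "a + l * b < 0"
proof (rule ccontr)
  assume "\<not> a + l * b < 0"
  then have h: "a + l * b \<ge> 0" by simp
  have "(m - l) * b < 0" using h assms(2) by (simp add: algebra_simps)
  then have bn: "b < 0" using assms(1) by (simp add: mult_less_0_iff)
  define t where "t = - a / b"
  have tb: "t * b = - a" unfolding t_def using bn by simp
  have "l * b \<ge> t * b" using tb h by simp
  then have "t \<ge> l" using bn by (simp add: mult_le_cancel_right)
  moreover have "m * b < t * b" using tb assms(2) by simp
  then have "t < m" using bn by (simp add: mult_less_cancel_right)
  ultimately show False using assms(3)[of t] tb by simp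
qed

lemma aff_ref_right:
  fixes a b h m :: real
  assumes "m < h" "a + m * b < 0" "\<And>t. m < t \<Longrightarrow> t \<le> h \<Longrightarrow> a + t * b \<noteq> 0"
  shows "a + h * b < 0"
proof -
  have "a + (- h) * (- b) < 0"
  proof (rule aff_ref_left[where l="- h" and m="- m" and a=a and b="- b"])
    fix t assume "- h \<le> t" "t < - m"
    then show "a + t * (- b) \<noteq> 0" using assms(3)[of "- t"] by simp
  qed (use assms in auto)
  then show ?thesis by simp
qed

lemma aff_flip:
  fixes a b l m h :: real
  assumes "l < m" "m < h" "a + m * b = 0" "a + l * b < 0"
  shows "a + h * b > 0"
proof -
  have "(l - m) * b < 0" using assms(3,4) by (simp add: algebra_simps)
  then have "b > 0" using assms(1) by (simp add: mult_less_0_iff)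
  moreover have "a + h * b = (h - m) * b" using assms(3) by (simp add: algebra_simps)
  ultimately show ?thesis using assms(2) by simp
qed


definition PF :: "point \<Rightarrow> point \<Rightarrow> real \<Rightarrow> point \<Rightarrow> real" where
  "PF u d s p = fv u p + s * fv d p"

definition Cr :: "point \<Rightarrow> point \<Rightarrow> point set \<Rightarrow> real set" where
  "Cr u d P = {s. \<exists>p\<in>P. \<exists>q\<in>P. p\<noteq>q \<and> PF u d s p = PF u d s q}"

lemma PF_diff: "PF u d s x - PF u d s y = (fv u x - fv u y) + s * (fv d x - fv d y)"
  unfolding PF_def by (simp add: algebra_simps)

lemma PF_wp: "PF u d s = fv (wp u d s)"
  by (rule ext) (simp add: PF_def fv_wp)

lemma inj_PF: "inj_on (PF u d s) P \<longleftrightarrow> s \<notin> Cr u d P"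
  unfolding inj_on_def Cr_def by blast

lemma sweep_local:
  assumes fin: "finite P" and gp: "general_position P" and AP: "A \<subseteq> P" and ev: "even (card P)"
    and clos: "\<And>x y. x\<in>P \<Longrightarrow> y\<in>P \<Longrightarrow> halving_line P x y \<Longrightarrow> (x\<in>A \<longleftrightarrow> y\<in>A)"
    and s: "l < m" "m < h" and nz: "wp u d m \<noteq> (0,0)"
    and inj1: "inj_on (PF u d l) P" and inj2: "inj_on (PF u d h) P"
    and nc: "\<And>t. l \<le> t \<Longrightarrow> t \<le> h \<Longrightarrow> t \<in> Cr u d P \<Longrightarrow> t = m"
  shows "card (A \<inter> Low (PF u d l) P) = card (A \<inter> Low (PF u d h) P)"
proof (rule comb_local[where Fz="PF u d m"])
  show "finite P" "A \<subseteq> P" "even (card P)" "inj_on (PF u d l) P" "inj_on (PF u d h) P"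
    using fin AP ev inj1 inj2 by auto
next
  fix x y assume xy: "x\<in>P" "y\<in>P" "PF u d m x < PF u d m y"
  show "PF u d l x < PF u d l y"
  proof -
    have "(fv u x - fv u y) + l * (fv d x - fv d y) < 0"
    proof (rule aff_ref_left[OF s(1)])
      show "fv u x - fv u y + m * (fv d x - fv d y) < 0" using xy(3) PF_diff[of u d m x y] by simp
    next
      fix t assume t: "l \<le> t" "t < m"
      show "fv u x - fv u y + t * (fv d x - fv d y) \<noteq> 0"
      proof
        assume "fv u x - fv u y + t * (fv d x - fv d y) = 0"
        then have "PF u d t x = PF u d t y" using PF_diff[of u d t x y] by simp
        moreover have "x \<noteq> y" using xy(3) by auto
        ultimately have "t \<in> Cr u d P" unfolding Cr_def using xy by blast
        then show False using nc[of t] t s by simp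
      qed
    qed
    then show ?thesis using PF_diff[of u d l x y] by simp
  qed
next
  fix x y assume xy: "x\<in>P" "y\<in>P" "PF u d m x < PF u d m y"
  show "PF u d h x < PF u d h y"
  proof -
    have "(fv u x - fv u y) + h * (fv d x - fv d y) < 0"
    proof (rule aff_ref_right[OF s(2)])
      show "fv u x - fv u y + m * (fv d x - fv d y) < 0" using xy(3) PF_diff[of u d m x y] by simp
    next
      fix t assume t: "m < t" "t \<le> h"
      show "fv u x - fv u y + t * (fv d x - fv d y) \<noteq> 0"
      proof
        assume "fv u x - fv u y + t * (fv d x - fv d y) = 0"
        then have "PF u d t x = PF u d t y" using PF_diff[of u d t x y] by simp
        moreover have "x \<noteq> y" using xy(3) by auto
        ultimately have "t \<in> Cr u d P" unfolding Cr_def using xy by blast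
        then show False using nc[of t] t s by simp
      qed
    qed
    then show ?thesis using PF_diff[of u d h x y] by simp
  qed
next
  fix x y assume xy: "x\<in>P" "y\<in>P" "x\<noteq>y" "PF u d m x = PF u d m y" "PF u d l x < PF u d l y"
  have "(fv u x - fv u y) + h * (fv d x - fv d y) > 0"
    by (rule aff_flip[OF s]) (use xy PF_diff[of u d m x y] PF_diff[of u d l x y] in auto)
  then show "PF u d h y < PF u d h x" using PF_diff[of u d h x y] by simp
next
  fix x y z assume "x\<in>P" "y\<in>P" "z\<in>P" "x\<noteq>y" "x\<noteq>z" "y\<noteq>z" "PF u d m x = PF u d m y" "PF u d m x = PF u d m z"
  then show False using geo_tri[OF nz gp] unfolding PF_wp by blast
next
  fix x y assume xy: "x\<in>P" "y\<in>P" "x\<noteq>y" "PF u d m x = PF u d m y"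
    "2 * card {z\<in>P. PF u d m z < PF u d m x} + 2 = card P"
  then have "halving_line P x y" using geo_half[OF fin gp nz] unfolding PF_wp by blast
  then show "x\<in>A \<longleftrightarrow> y\<in>A" using clos xy by blast
qed


lemma finite_Cr:
  assumes fin: "finite P" and inj: "inj_on (PF u d s0) P"
  shows "finite (Cr u d P)"
proof -
  have "finite {s. \<exists>p\<in>P. \<exists>q\<in>P. p\<noteq>q \<and> fv u p + s*fv d p = fv u q + s*fv d q}"
  proof (rule finite_cross[OF fin])
    fix p q assume pq: "p\<in>P" "q\<in>P" "p\<noteq>q"
    then have "PF u d s0 p \<noteq> PF u d s0 q" using inj unfolding inj_on_def by blast
    then show "fv u p \<noteq> fv u q \<or> fv d p \<noteq> fv d q" unfolding PF_def by auto
  qed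
  then show ?thesis unfolding Cr_def PF_def .
qed

lemma sweep:
  assumes fin: "finite P" and gp: "general_position P" and AP: "A \<subseteq> P" and ev: "even (card P)"
    and clos: "\<And>x y. x\<in>P \<Longrightarrow> y\<in>P \<Longrightarrow> halving_line P x y \<Longrightarrow> (x\<in>A \<longleftrightarrow> y\<in>A)"
  shows "l < h \<Longrightarrow> inj_on (PF u d l) P \<Longrightarrow> inj_on (PF u d h) P \<Longrightarrow>
         (\<And>s. l \<le> s \<Longrightarrow> s \<le> h \<Longrightarrow> wp u d s \<noteq> (0,0)) \<Longrightarrow>
         card (A \<inter> Low (PF u d l) P) = card (A \<inter> Low (PF u d h) P)"
proof (induction "card (Cr u d P \<inter> {l<..<h})" arbitrary: l rule: less_induct)
  case less
  note lh = less.prems(1) and inj1 = less.prems(2) and inj2 = less.prems(3) and nz = less.prems(4)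
  have fC: "finite (Cr u d P)" using finite_Cr[OF fin inj1] .
  define X where "X = Cr u d P \<inter> {l<..<h}"
  have fX: "finite X" unfolding X_def using fC by simp
  have l_nC: "l \<notin> Cr u d P" and h_nC: "h \<notin> Cr u d P" using inj1 inj2 inj_PF by blast+
  show ?case
  proof (cases "X = {}")
    case True
    show ?thesis
    proof (rule sweep_local[OF fin gp AP ev clos, where m="(l+h)/2"])
      show "l < (l + h) / 2" "(l + h) / 2 < h" using lh by simp_all
      show "wp u d ((l + h) / 2) \<noteq> (0, 0)" using nz lh by simp
      show "inj_on (PF u d l) P" "inj_on (PF u d h) P" using inj1 inj2 .
      fix t assume t: "l \<le> t" "t \<le> h" "t \<in> Cr u d P"
      then have "t \<noteq> l" "t \<noteq> h" using l_nC h_nC by auto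
      then have "t \<in> X" unfolding X_def using t by auto
      then show "t = (l + h) / 2" using True by simp
    qed (auto)
  next
    case False
    define m where "m = Min X"
    have mX: "m \<in> X" unfolding m_def using fX False by simp
    have mmin: "\<And>t. t \<in> X \<Longrightarrow> m \<le> t" unfolding m_def using fX by simp
    define Y where "Y = X - {m}"
    have fY: "finite Y" unfolding Y_def using fX by simp
    define nx where "nx = (if Y = {} then h else Min Y)"
    have m_lh: "l < m" "m < h" using mX unfolding X_def by auto
    have nx_gt: "m < nx" "nx \<le> h"
    proof -
      show "m < nx"
      proof (cases "Y = {}")
        case True then show ?thesis unfolding nx_def using m_lh by simp
      next
        case False
        have "Min Y \<in> Y" using fY False by simp
        then have "Min Y \<in> X" "Min Y \<noteq> m" unfolding Y_def by auto
        then show ?thesis unfolding nx_def using False mmin by (simp add: order_less_le)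
      qed
      show "nx \<le> h"
      proof (cases "Y = {}")
        case True then show ?thesis unfolding nx_def by simp
      next
        case False
        have "Min Y \<in> Y" using fY False by simp
        then show ?thesis unfolding nx_def Y_def X_def using False by auto
      qed
    qed
    have Ybig: "\<And>t. t \<in> Y \<Longrightarrow> nx \<le> t"
      unfolding nx_def using fY by (auto)
    define s' where "s' = (m + nx) / 2"
    have s'b: "m < s'" "s' < nx" unfolding s'_def using nx_gt by simp_all
    have s'nC: "s' \<notin> Cr u d P"
    proof
      assume "s' \<in> Cr u d P"
      then have "s' \<in> Y" unfolding Y_def X_def using s'b nx_gt m_lh by auto
      then show False using Ybig s'b by force
    qed
    have inj': "inj_on (PF u d s') P" using s'nC inj_PF by blast
    have step1: "card (A \<inter> Low (PF u d l) P) = card (A \<inter> Low (PF u d s') P)"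
    proof (rule sweep_local[OF fin gp AP ev clos m_lh(1) s'b(1)])
      show "wp u d m \<noteq> (0, 0)" using nz m_lh by simp
      show "inj_on (PF u d l) P" "inj_on (PF u d s') P" using inj1 inj' .
      fix t assume t: "l \<le> t" "t \<le> s'" "t \<in> Cr u d P"
      then have "t \<noteq> l" "t \<noteq> s'" using l_nC s'nC by auto
      then have tX: "t \<in> X" unfolding X_def using t s'b nx_gt by auto
      show "t = m"
      proof (rule ccontr)
        assume "t \<noteq> m"
        then have "t \<in> Y" unfolding Y_def using tX by simp
        then show False using Ybig t s'b by force
      qed
    qed
    have step2: "card (A \<inter> Low (PF u d s') P) = card (A \<inter> Low (PF u d h) P)"
    proof (rule less.hyps)
      have sub: "Cr u d P \<inter> {s'<..<h} \<subset> X"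
      proof
        show "Cr u d P \<inter> {s'<..<h} \<subseteq> X" unfolding X_def using s'b m_lh by auto
        show "Cr u d P \<inter> {s'<..<h} \<noteq> X" using mX s'b by auto
      qed
      show "card (Cr u d P \<inter> {s'<..<h}) < card (Cr u d P \<inter> {l<..<h})"
        using psubset_card_mono[OF fX sub] unfolding X_def .
      show "s' < h" using s'b nx_gt by simp
      show "inj_on (PF u d s') P" "inj_on (PF u d h) P" using inj' inj2 .
      fix s assume "s' \<le> s" "s \<le> h" then show "wp u d s \<noteq> (0, 0)" using nz s'b m_lh by simp
    qed
    show ?thesis using step1 step2 by simp
  qed
qed


lemma Low_neg:
  fixes F :: "point \<Rightarrow> real"
  assumes fin: "finite P" and inj: "inj_on F P" and ev: "even (card P)"
  shows "Low (\<lambda>p. - F p) P = P - Low F P"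
proof (rule set_eqI)
  fix p show "p \<in> Low (\<lambda>p. - F p) P \<longleftrightarrow> p \<in> P - Low F P"
  proof (cases "p \<in> P")
    case False then show ?thesis unfolding Low_def by auto
  next
    case pP: True
    have un: "{x\<in>P. F x < F p} \<union> {x\<in>P. F p < F x} = P - {p}"
      using inj pP unfolding inj_on_def by (auto, metis linorder_neqE_linordered_idom)
    have "card ({x\<in>P. F x < F p} \<union> {x\<in>P. F p < F x}) = card {x\<in>P. F x < F p} + card {x\<in>P. F p < F x}"
      by (rule card_Un_disjoint) (use fin in auto)
    moreover have "card P > 0" using pP fin card_gt_0_iff by blast
    ultimately have c: "rk F P p + rk (\<lambda>p. - F p) P p + 1 = card P"
      using un pP fin unfolding rk_def by (simp add: card_Diff_singleton)
    obtain k where k: "card P = 2 * k" using ev by blast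
    have "2 * rk (\<lambda>p. - F p) P p < card P \<longleftrightarrow> \<not> 2 * rk F P p < card P"
      using c k by presburger
    then show ?thesis unfolding Low_def using pP by auto
  qed
qed

lemma rot_sep:
  fixes u :: point
  assumes "u \<noteq> (0,0)" "fv (- snd u, fst u) p = fv (- snd u, fst u) q" "fv u p = fv u q"
  shows "p = q"
proof -
  obtain u1 u2 where u: "u = (u1, u2)" by (cases u)
  define D1 where "D1 = fst p - fst q"
  define D2 where "D2 = snd p - snd q"
  have e1: "u1 * D1 + u2 * D2 = 0" using assms(3) unfolding fv_def u D1_def D2_def by (simp add: algebra_simps)
  have e2: "- u2 * D1 + u1 * D2 = 0" using assms(2) unfolding fv_def u D1_def D2_def by (simp add: algebra_simps)
  have N: "u1^2 + u2^2 > 0" using assms(1) u by (auto simp: sum_power2_gt_zero_iff)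
  have i1: "D1 * (u1^2 + u2^2) = u1 * (u1 * D1 + u2 * D2) - u2 * (- u2 * D1 + u1 * D2)" by algebra
  have "D1 * (u1^2 + u2^2) = 0" unfolding i1 e1 e2 by simp
  then have "D1 = 0" using N by auto
  have i2: "D2 * (u1^2 + u2^2) = u2 * (u1 * D1 + u2 * D2) + u1 * (- u2 * D1 + u1 * D2)" by algebra
  have "D2 * (u1^2 + u2^2) = 0" unfolding i2 e1 e2 by simp
  then have "D2 = 0" using N by auto
  show ?thesis using \<open>D1 = 0\<close> \<open>D2 = 0\<close> unfolding D1_def D2_def by (simp add: prod_eq_iff)
qed

lemma exists_generic:
  fixes u :: point
  assumes fin: "finite P" and u0: "u \<noteq> (0,0)"
  shows "\<exists>t. inj_on (PF (- snd u, fst u) u t) P"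
proof -
  have "finite (Cr (- snd u, fst u) u P)"
    unfolding Cr_def PF_def
  proof (rule finite_cross[OF fin])
    fix p q assume "p\<in>P" "q\<in>P" "p\<noteq>q"
    then show "fv (- snd u, fst u) p \<noteq> fv (- snd u, fst u) q \<or> fv u p \<noteq> fv u q"
      using rot_sep[OF u0] by blast
  qed
  then obtain t where "t \<notin> Cr (- snd u, fst u) u P"
    using ex_new_if_finite[OF infinite_UNIV_char_0] by blast
  then show ?thesis using inj_PF by blast
qed

lemma global_half:
  assumes fin: "finite P" and gp: "general_position P" and AP: "A \<subseteq> P" and ev: "even (card P)"
    and clos: "\<And>x y. x\<in>P \<Longrightarrow> y\<in>P \<Longrightarrow> halving_line P x y \<Longrightarrow> (x\<in>A \<longleftrightarrow> y\<in>A)"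
    and inj: "inj_on (fv u) P" and u0: "u \<noteq> (0,0)"
  shows "2 * card (A \<inter> Low (fv u) P) = card A"
proof -
  obtain u1 u2 where u: "u = (u1, u2)" by (cases u)
  have N: "u1^2 + u2^2 > 0" using u0 u by (auto simp: sum_power2_gt_zero_iff)
  obtain t where t: "inj_on (PF (- snd u, fst u) u t) P" using exists_generic[OF fin u0] by blast
  define w :: point where "w = (- u2 + t * u1, u1 + t * u2)"
  have fw: "PF (- snd u, fst u) u t = fv w" unfolding PF_def fv_def w_def u by (rule ext) (simp add: algebra_simps)
  have injw: "inj_on (fv w) P" using t fw by simp
  define d1 :: point where "d1 = (fst w - u1, snd w - u2)"
  have e10: "PF u d1 0 = fv u" by (rule ext) (simp add: PF_def)
  have e11: "PF u d1 1 = fv w" by (rule ext) (simp add: PF_def fv_def d1_def u algebra_simps)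
  have c1: "card (A \<inter> Low (PF u d1 0) P) = card (A \<inter> Low (PF u d1 1) P)"
  proof (rule sweep[OF fin gp AP ev clos])
    show "(0::real) < 1" by simp
    show "inj_on (PF u d1 0) P" "inj_on (PF u d1 1) P" using inj injw e10 e11 by simp_all
    fix s :: real assume s: "0 \<le> s" "s \<le> 1"
    show "wp u d1 s \<noteq> (0, 0)"
    proof
      assume z: "wp u d1 s = (0, 0)"
      define x where "x = u1 + s * (fst w - u1)"
      define y where "y = u2 + s * (snd w - u2)"
      have xy: "x = 0" "y = 0" using z unfolding wp_def x_def y_def d1_def u by auto
      have "s * (u1^2 + u2^2) = - u2 * x + u1 * y" unfolding x_def y_def w_def by (simp only: fst_conv snd_conv) algebra
      then have "s = 0" using xy N by auto
      then show False using xy N unfolding x_def y_def by simp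
    qed
  qed
  define d2 :: point where "d2 = (- u1 - fst w, - u2 - snd w)"
  have e20: "PF w d2 0 = fv w" by (rule ext) (simp add: PF_def)
  have e21: "PF w d2 1 = (\<lambda>p. - fv u p)" by (rule ext) (simp add: PF_def fv_def d2_def u algebra_simps)
  have injn: "inj_on (\<lambda>p. - fv u p) P" using inj unfolding inj_on_def by simp
  have c2: "card (A \<inter> Low (PF w d2 0) P) = card (A \<inter> Low (PF w d2 1) P)"
  proof (rule sweep[OF fin gp AP ev clos])
    show "(0::real) < 1" by simp
    show "inj_on (PF w d2 0) P" "inj_on (PF w d2 1) P" using injw injn e20 e21 by simp_all
    fix s :: real assume s: "0 \<le> s" "s \<le> 1"
    show "wp w d2 s \<noteq> (0, 0)"
    proof
      assume z: "wp w d2 s = (0, 0)"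
      define x where "x = fst w + s * (- u1 - fst w)"
      define y where "y = snd w + s * (- u2 - snd w)"
      have xy: "x = 0" "y = 0" using z unfolding wp_def x_def y_def d2_def by auto
      have "(1 - s) * (u1^2 + u2^2) = - u2 * x + u1 * y" unfolding x_def y_def w_def by (simp only: fst_conv snd_conv) algebra
      then have "s = 1" using xy N by auto
      then show False using xy N unfolding x_def y_def by simp
    qed
  qed
  have fA: "finite A" using fin AP finite_subset by blast
  have "A \<inter> Low (\<lambda>p. - fv u p) P = A - Low (fv u) P"
    using Low_neg[OF fin inj ev] AP by blast
  then have "card (A \<inter> Low (\<lambda>p. - fv u p) P) = card (A - Low (fv u) P)" by simp
  also have "\<dots> = card A - card (A \<inter> Low (fv u) P)"
    by (rule card_Diff_subset_Int) (use fA in simp)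
  finally have "card (A \<inter> Low (\<lambda>p. - fv u p) P) = card A - card (A \<inter> Low (fv u) P)" .
  moreover have "card (A \<inter> Low (fv u) P) \<le> card A"
    by (rule card_mono[OF fA]) auto
  ultimately show ?thesis using c1 c2 e10 e11 e20 e21 by simp
qed


lemma halving_side:
  assumes fin: "finite P" and gp: "general_position P" and AP: "A \<subseteq> P" and ev: "even (card P)"
    and clos: "\<And>x y. x\<in>P \<Longrightarrow> y\<in>P \<Longrightarrow> halving_line P x y \<Longrightarrow> (x\<in>A \<longleftrightarrow> y\<in>A)"
    and aA: "a \<in> A" and bA: "b \<in> A" and ab: "a \<noteq> b"
  shows "(2 * card {c\<in>P. orient a b c < 0} + 2 = card P \<longrightarrow> 2 * card {c\<in>A. orient a b c < 0} + 2 = card A) \<and>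
         (2 * card {c\<in>P. orient a b c < 0} + 4 \<le> card P \<longrightarrow> 2 * card {c\<in>A. orient a b c < 0} + 4 \<le> card A)"
proof -
  define Tm where "Tm = {c\<in>P. orient a b c < 0}"
  have ATm: "{c\<in>A. orient a b c < 0} = A \<inter> Tm" unfolding Tm_def using AP by auto
  have aP: "a \<in> P" and bP: "b \<in> P" using aA bA AP by auto
  define d :: point where "d = (fst b - fst a, snd b - snd a)"
  define u0 :: point where "u0 = (- snd d, fst d)"
  have d0: "d \<noteq> (0,0)" using ab unfolding d_def by (auto simp: prod_eq_iff)
  have ori: "fv u0 c - fv u0 a = orient a b c" for c
    unfolding fv_def u0_def d_def orient_def by (simp add: algebra_simps)
  define F0 where "F0 = PF u0 d 0"
  have F0u: "F0 = fv u0" unfolding F0_def by (rule ext) (simp add: PF_def)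
  have fC: "finite (Cr u0 d P)" unfolding Cr_def PF_def
  proof (rule finite_cross[OF fin])
    fix p q assume "p\<in>P" "q\<in>P" "p\<noteq>q"
    then show "fv u0 p \<noteq> fv u0 q \<or> fv d p \<noteq> fv d q" using rot_sep[OF d0] unfolding u0_def by blast
  qed
  define S where "S = insert (-1) (Cr u0 d P \<inter> {..<0})"
  have fS: "finite S" "S \<noteq> {}" unfolding S_def using fC by auto
  define M where "M = Max S"
  have Mneg: "M < 0" unfolding M_def using fS by (simp add: Max_less_iff S_def)
  have Mge: "\<And>t. t \<in> S \<Longrightarrow> t \<le> M" unfolding M_def using fS by simp
  define l where "l = M / 2"
  have l: "M < l" "l < 0" unfolding l_def using Mneg by simp_all
  have ncr: "t \<notin> Cr u0 d P" if "l \<le> t" "t < 0" for t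
  proof
    assume "t \<in> Cr u0 d P"
    then have "t \<in> S" unfolding S_def using that by auto
    then show False using Mge[of t] l that by simp
  qed
  define F1 where "F1 = PF u0 d l"
  have inj1: "inj_on F1 P" unfolding F1_def using ncr[of l] l inj_PF by blast
  have ref: "F1 x < F1 y" if xy: "x\<in>P" "y\<in>P" "F0 x < F0 y" for x y
  proof -
    have "(fv u0 x - fv u0 y) + l * (fv d x - fv d y) < 0"
    proof (rule aff_ref_left[OF l(2)])
      show "fv u0 x - fv u0 y + 0 * (fv d x - fv d y) < 0" using xy(3) unfolding F0u by simp
    next
      fix t assume t: "l \<le> t" "t < 0"
      show "fv u0 x - fv u0 y + t * (fv d x - fv d y) \<noteq> 0"
      proof
        assume "fv u0 x - fv u0 y + t * (fv d x - fv d y) = 0"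
        then have "PF u0 d t x = PF u0 d t y" using PF_diff[of u0 d t x y] by simp
        moreover have "x \<noteq> y" using xy(3) by auto
        ultimately have "t \<in> Cr u0 d P" unfolding Cr_def using xy by blast
        then show False using ncr t by blast
      qed
    qed
    then show ?thesis unfolding F1_def using PF_diff[of u0 d l x y] by simp
  qed
  have wnz: "wp u0 d l \<noteq> (0,0)"
  proof
    assume "wp u0 d l = (0,0)"
    then have "F1 a = F1 b" unfolding F1_def PF_wp fv_def by simp
    then show False using inj1 aP bP ab unfolding inj_on_def by blast
  qed
  have gh: "2 * card (A \<inter> Low F1 P) = card A"
    using global_half[OF fin gp AP ev clos _ wnz] inj1 unfolding F1_def PF_wp by blast
  have Tm_F0: "Tm = {c\<in>P. F0 c < F0 a}" unfolding Tm_def F0u using ori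
    by (metis diff_less_0_iff_less)
  have F0b: "F0 b = F0 a" using ori[of b] unfolding F0u orient_def by simp
  have no: "F0 w \<noteq> F0 a" if "w\<in>P" "w \<noteq> a" "w \<noteq> b" for w
  proof
    assume "F0 w = F0 a"
    then have "orient a b w = 0" using ori[of w] unfolding F0u by simp
    then show False using gp aP bP that ab unfolding general_position_def by metis
  qed
  obtain x y where xy: "x \<in> {a,b}" "y \<in> {a,b}" "x \<noteq> y" "F1 x < F1 y"
  proof -
    have "F1 a \<noteq> F1 b" using inj1 aP bP ab unfolding inj_on_def by blast
    then consider "F1 a < F1 b" | "F1 b < F1 a" by linarith
    then show ?thesis
    proof cases
      case 1 show ?thesis by (rule that[of a b]) (use ab 1 in auto)
    next
      case 2 show ?thesis by (rule that[of b a]) (use ab 2 in auto)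
    qed
  qed
  have xyP: "x \<in> P" "y \<in> P" using xy aP bP by auto
  have F0x: "F0 x = F0 a" "F0 y = F0 a" using xy F0b by auto
  have xyA: "x \<in> A" "y \<in> A" using xy aA bA by auto
  have nox: "F0 w \<noteq> F0 x" if "w\<in>P" "w \<noteq> x" "w \<noteq> y" for w
    using no[of w] that xy F0x by auto
  have noy: "F0 w \<noteq> F0 y" if "w\<in>P" "w \<noteq> y" "w \<noteq> x" for w
    using no[of w] that xy F0x by auto
  have rx: "rk F1 P x = card Tm"
    using rank_pair[of P F0 F1 x y, OF fin ref xyP xy(3) _ nox] F0x xy(4) unfolding Tm_F0 by simp
  have ry: "rk F1 P y = card Tm + 1"
    using rank_pair[of P F0 F1 y x, OF fin ref xyP(2,1) _ _ noy] F0x xy(3,4) unfolding Tm_F0 by simp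
  have fTm: "finite Tm" unfolding Tm_def using fin by simp
  have abTm: "a \<notin> Tm" "b \<notin> Tm" unfolding Tm_def orient_def by auto
  have xyTm: "x \<notin> Tm" "y \<notin> Tm" using abTm xy by auto
  have rlow: "rk F1 P p < card Tm" if pT: "p \<in> Tm" for p
  proof -
    have "{z\<in>P. F1 z < F1 p} \<subseteq> Tm - {p}"
    proof
      fix z assume z: "z \<in> {z\<in>P. F1 z < F1 p}"
      have pP: "p \<in> P" using pT unfolding Tm_def by simp
      have "\<not> F0 p < F0 z" using ref[OF pP, of z] z by auto
      then have "F0 z < F0 a" using pT unfolding Tm_F0 by auto
      then show "z \<in> Tm - {p}" using z unfolding Tm_F0 by auto
    qed
    then have "rk F1 P p \<le> card (Tm - {p})" unfolding rk_def using fTm by (simp add: card_mono)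
    moreover have "card (Tm - {p}) < card Tm" using fTm pT by (rule card_Diff1_less)
    ultimately show ?thesis by simp
  qed
  have rhigh: "card Tm + 2 \<le> rk F1 P p" if pP: "p \<in> P" "p \<notin> Tm" "p \<noteq> a" "p \<noteq> b" for p
  proof -
    have "orient a b p \<noteq> 0" using gp aP bP pP ab unfolding general_position_def by metis
    then have "orient a b p > 0" using pP(2) unfolding Tm_def using pP(1) by simp
    then have gt: "F0 a < F0 p" using ori[of p] unfolding F0u by simp
    have "Tm \<union> {a, b} \<subseteq> {z\<in>P. F1 z < F1 p}"
    proof
      fix z assume "z \<in> Tm \<union> {a, b}"
      then have zP: "z \<in> P" and "F0 z \<le> F0 a" using aP bP F0b unfolding Tm_F0 by auto
      then have "F0 z < F0 p" using gt by simp
      then have "F1 z < F1 p" using ref[OF zP pP(1)] by simp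
      then show "z \<in> {z\<in>P. F1 z < F1 p}" using zP by simp
    qed
    then have "card (Tm \<union> {a, b}) \<le> rk F1 P p" unfolding rk_def using fin by (simp add: card_mono)
    moreover have "card (Tm \<union> {a, b}) = card Tm + 2" using fTm abTm ab by simp
    ultimately show ?thesis by simp
  qed
  have part: "p \<in> Tm \<or> p = x \<or> p = y \<or> (p \<notin> Tm \<and> p \<noteq> a \<and> p \<noteq> b)" for p
    using xy by auto
  have fA: "finite A" using fin AP finite_subset by blast
  have K1: "2 * card (A \<inter> Tm) + 2 = card A" if h: "2 * card Tm + 2 = card P"
  proof -
    have "A \<inter> Low F1 P = insert x (A \<inter> Tm)"
    proof (rule set_eqI)
      fix p show "p \<in> A \<inter> Low F1 P \<longleftrightarrow> p \<in> insert x (A \<inter> Tm)"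
      proof (cases "p \<in> A")
        case False then show ?thesis using xyA by auto
      next
        case True
        then have pP: "p \<in> P" using AP by auto
        consider "p \<in> Tm" | "p = x" | "p = y" | "p \<notin> Tm \<and> p \<noteq> a \<and> p \<noteq> b" using part by blast
        then show ?thesis
        proof cases
          case 1 then show ?thesis using rlow[of p] pP h True unfolding Low_def by auto
        next
          case 2 then show ?thesis using rx pP h True unfolding Low_def by auto
        next
          case 3 then show ?thesis using ry pP h True xy(3) xyTm unfolding Low_def by auto
        next
          case 4 then show ?thesis using rhigh[of p] pP h True xyTm xy unfolding Low_def by auto
        qed
      qed
    qed
    then have "card (A \<inter> Low F1 P) = card (A \<inter> Tm) + 1" using xyTm fA by simp
    then show ?thesis using gh by simp
  qed
  have K2: "2 * card (A \<inter> Tm) + 4 \<le> card A" if h: "2 * card Tm + 4 \<le> card P"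
  proof -
    have "insert x (insert y (A \<inter> Tm)) \<subseteq> A \<inter> Low F1 P"
    proof
      fix p assume p: "p \<in> insert x (insert y (A \<inter> Tm))"
      then have pA: "p \<in> A" using xyA by auto
      then have pP: "p \<in> P" using AP by auto
      show "p \<in> A \<inter> Low F1 P"
        using p rx ry rlow[of p] pA pP h unfolding Low_def by auto
    qed
    then have "card (insert x (insert y (A \<inter> Tm))) \<le> card (A \<inter> Low F1 P)"
      using fA by (simp add: card_mono)
    moreover have "card (insert x (insert y (A \<inter> Tm))) = card (A \<inter> Tm) + 2"
      using xyTm xy(3) fA by simp
    ultimately show ?thesis using gh by simp
  qed
  show ?thesis unfolding ATm using K1 K2 unfolding Tm_def by blast
qed


theorem mainTheorem5:
  fixes P A :: "point set" and \<C> :: "point set set"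
  assumes "finite P" and "general_position P" and "even (card P)"
    and "\<C> \<subseteq> components P" and "A = \<Union>\<C>"
  shows "even (card A) \<and>
         (\<forall>a\<in>A. \<forall>b\<in>A. halving_line A a b \<longleftrightarrow> halving_line P a b) \<and>
         (\<forall>a\<in>A. \<forall>b\<in>A. underlying_adj A a b \<longleftrightarrow> underlying_adj P a b)"
proof -
  note fin = assms(1) and gp = assms(2) and ev = assms(3)
  have AP: "A \<subseteq> P" using comp_subset[OF assms(4,5)] .
  have clos: "\<And>x y. x\<in>P \<Longrightarrow> y\<in>P \<Longrightarrow> halving_line P x y \<Longrightarrow> (x\<in>A \<longleftrightarrow> y\<in>A)"
    using comp_closed[OF assms(4,5)] by blast
  have evA: "even (card A)"
  proof -
    define u :: point where "u = (1, 0)"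
    have u0: "u \<noteq> (0,0)" unfolding u_def by simp
    obtain t where t: "inj_on (PF (- snd u, fst u) u t) P" using exists_generic[OF fin u0] by blast
    have wz: "wp (- snd u, fst u) u t \<noteq> (0,0)" unfolding wp_def u_def by simp
    have injw: "inj_on (fv (wp (- snd u, fst u) u t)) P" using t unfolding PF_wp .
    have "2 * card (A \<inter> Low (fv (wp (- snd u, fst u) u t)) P) = card A"
      by (rule global_half[OF fin gp AP ev clos injw wz])
    then show ?thesis by (metis dvd_triv_left)
  qed
  have hv: "halving_line A a b \<longleftrightarrow> halving_line P a b" if aA: "a \<in> A" and bA: "b \<in> A" for a b
  proof (cases "a = b")
    case True then show ?thesis unfolding halving_line_def by simp
  next
    case ab: False
    have aP: "a \<in> P" and bP: "b \<in> P" using aA bA AP by auto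
    have o: "orient b a c = - orient a b c" for c unfolding orient_def by algebra
    have s1: "{c\<in>X. orient b a c < 0} = {c\<in>X. orient a b c > 0}" for X using o by auto
    define Tm where "Tm = {c\<in>P. orient a b c < 0}"
    define Tp where "Tp = {c\<in>P. orient a b c > 0}"
    note HS1 = halving_side[OF fin gp AP ev clos aA bA ab]
    note HS2 = halving_side[OF fin gp AP ev clos bA aA ab[symmetric]]
    have sum: "card P = card Tm + card Tp + 2"
    proof -
      have part: "P = Tm \<union> Tp \<union> {a, b}"
      proof (rule set_eqI)
        fix c show "c \<in> P \<longleftrightarrow> c \<in> Tm \<union> Tp \<union> {a, b}"
        proof
          assume cP: "c \<in> P"
          show "c \<in> Tm \<union> Tp \<union> {a, b}"
          proof (cases "c = a \<or> c = b")
            case True then show ?thesis by blast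
          next
            case False
            then have "orient a b c \<noteq> 0" using gp aP bP cP ab unfolding general_position_def by metis
            then show ?thesis unfolding Tm_def Tp_def using cP by (auto simp: neq_iff)
          qed
        next
          assume "c \<in> Tm \<union> Tp \<union> {a, b}" then show "c \<in> P" unfolding Tm_def Tp_def using aP bP by auto
        qed
      qed
      have fT: "finite Tm" "finite Tp" unfolding Tm_def Tp_def using fin by auto
      have abT: "a \<notin> Tm" "b \<notin> Tm" "a \<notin> Tp" "b \<notin> Tp" unfolding Tm_def Tp_def orient_def by auto
      have "card (Tm \<union> Tp \<union> {a, b}) = card (Tm \<union> Tp) + card {a,b}"
        by (rule card_Un_disjoint) (use fT abT in auto)
      also have "card (Tm \<union> Tp) = card Tm + card Tp"
        by (rule card_Un_disjoint) (use fT in \<open>auto simp: Tm_def Tp_def\<close>)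
      finally show ?thesis using part ab by simp
    qed
    have HS1': "(2 * card Tm + 2 = card P \<longrightarrow> 2 * card {c\<in>A. orient a b c < 0} + 2 = card A) \<and>
         (2 * card Tm + 4 \<le> card P \<longrightarrow> 2 * card {c\<in>A. orient a b c < 0} + 4 \<le> card A)"
      using HS1 unfolding Tm_def .
    have HS2': "(2 * card Tp + 2 = card P \<longrightarrow> 2 * card {c\<in>A. orient a b c > 0} + 2 = card A) \<and>
         (2 * card Tp + 4 \<le> card P \<longrightarrow> 2 * card {c\<in>A. orient a b c > 0} + 4 \<le> card A)"
      using HS2 unfolding Tp_def s1 .
    obtain k where k: "card P = 2 * k" using ev by blast
    show ?thesis
    proof
      assume h: "halving_line A a b"
      then have hA: "2 * card {c\<in>A. orient a b c > 0} + 2 = card A" "2 * card {c\<in>A. orient a b c < 0} + 2 = card A"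
        unfolding halving_line_def by auto
      have "2 * card Tm + 2 = card P"
      proof (rule ccontr)
        assume ne: "2 * card Tm + 2 \<noteq> card P"
        then have "2 * card Tm + 4 \<le> card P \<or> 2 * card Tp + 4 \<le> card P" using sum k by presburger
        then show False using HS1' HS2' hA by auto
      qed
      moreover then have "2 * card Tp + 2 = card P" using sum by simp
      ultimately show "halving_line P a b" unfolding halving_line_def Tm_def Tp_def using aP bP ab by simp
    next
      assume h: "halving_line P a b"
      then have "2 * card Tm + 2 = card P" "2 * card Tp + 2 = card P"
        unfolding halving_line_def Tm_def Tp_def by auto
      then show "halving_line A a b" unfolding halving_line_def using HS1' HS2' aA bA ab by simp
    qed
  qed
  show ?thesis using evA hv unfolding underlying_adj_def by blast
qed

end
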